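(* Let $\delta\in(0,1)$ and let $(G,\beta,\gamma,\lambda)$ be an anti-ferromagnetic two-spin system whose graph $G$ has maximum degree $\Delta$. Let $\chi=+1$ if $\lambda\le(\gamma/\beta)^{\Delta/2}$ and $\chi=-1$ otherwise. Then: (1) For every $1\le d<\Delta$: if $(\beta,\gamma,\lambda)$ is $d$-unique with gap $\delta$, then $(\beta,\gamma,(1+\frac\delta2)^\chi\lambda)$ is $d$-unique with gap $\frac\delta2$. (2) Suppose moreover that $(\beta,\gamma,\lambda)$ is $(\Delta-1)$-unique with gap $\delta$ and $\Delta-1>(1-\frac\delta2)\overline\Delta$, where $\overline\Delta=\frac{1+\sqrt{\beta\gamma}}{1-\sqrt{\beta\gamma}}$. Then $\lambda\le(\gamma/\beta)^{\Delta/2}$ implies $(1+\frac\delta2)^\chi\lambda<(\gamma/\beta)^{\Delta/2}$, and $\lambda>(\gamma/\beta)^{\Delta/2}$ implies $(1+\frac\delta2)^\chi\lambda>(\gamma/\beta)^{\Delta/2}$.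
   Context: Anti-ferromagnetic two-spin parameters: $0\le\beta\le\gamma$, $\gamma>0$, $\lambda>0$, $\beta\gamma<1$. For an integer $d\ge1$, $(\beta,\gamma,\lambda)$ is $d$-unique with gap $\delta$ if $\frac{d(1-\beta\gamma)\hat x_d}{(\beta\hat x_d+1)(\hat x_d+\gamma)}\le1-\delta$, where $\hat x_d>0$ is the unique fixed point of $F_d(x)=\lambda\left(\frac{\beta x+1}{x+\gamma}\right)^d$. Convention: $(\gamma/\beta)^{\Delta/2}=+\infty$ when $\beta=0$. *)

theory Defs
  imports Complex_Main "HOL-Library.Extended_Real"
begin

definition antiferro :: "real \<Rightarrow> real \<Rightarrow> real \<Rightarrow> bool" where
  "antiferro b g lam \<longleftrightarrow> 0 \<le> b \<and> b \<le> g \<and> g > 0 \<and> lam > 0 \<and> b * g < 1"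

definition F_map :: "real \<Rightarrow> real \<Rightarrow> real \<Rightarrow> nat \<Rightarrow> real \<Rightarrow> real" where
  "F_map b g lam d x = lam * ((b * x + 1) / (x + g)) ^ d"

definition xhat :: "real \<Rightarrow> real \<Rightarrow> real \<Rightarrow> nat \<Rightarrow> real" where
  "xhat b g lam d = (THE x. x > 0 \<and> F_map b g lam d x = x)"

definition d_unique :: "nat \<Rightarrow> real \<Rightarrow> real \<Rightarrow> real \<Rightarrow> real \<Rightarrow> bool" where
  "d_unique d \<delta> b g lam \<longleftrightarrow> d \<ge> 1 \<and>
     (let x = xhat b g lam d in
       real d * (1 - b * g) * x / ((b * x + 1) * (x + g)) \<le> 1 - \<delta>)"

definition thr :: "real \<Rightarrow> real \<Rightarrow> nat \<Rightarrow> ereal" where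
  "thr b g \<Delta> = (if b = 0 then \<infinity> else ereal ((g / b) powr (real \<Delta> / 2)))"

definition chi :: "real \<Rightarrow> real \<Rightarrow> real \<Rightarrow> nat \<Rightarrow> int" where
  "chi b g lam \<Delta> = (if ereal lam \<le> thr b g \<Delta> then 1 else -1)"

definition Delta_bar :: "real \<Rightarrow> real \<Rightarrow> real" where
  "Delta_bar b g = (1 + sqrt (b * g)) / (1 - sqrt (b * g))"

end

theory Submission
  imports Defs
begin

definition PhiF :: "nat \<Rightarrow> real \<Rightarrow> real \<Rightarrow> real \<Rightarrow> real" where
  "PhiF d b g x = real d * (1 - b * g) * x / ((b * x + 1) * (x + g))"

lemma r_anti:
  fixes b g x y :: real
  assumes "0 \<le> b" "0 < g" "b * g < 1" "0 \<le> x" "x \<le> y"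
  shows "(b * y + 1) / (y + g) \<le> (b * x + 1) / (x + g)"
proof -
  have "(b * y + 1) * (x + g) \<le> (b * x + 1) * (y + g)"
  proof -
    have "(b*g - 1) * y \<le> (b*g - 1) * x" using assms by (intro mult_left_mono_neg) auto
    thus ?thesis by (simp add: algebra_simps)
  qed
  thus ?thesis using assms by (simp add: divide_simps)
qed

lemma r_nonneg:
  fixes b g x :: real
  assumes "0 \<le> b" "0 < g" "0 \<le> x"
  shows "0 \<le> (b * x + 1) / (x + g)"
  using assms by simp

lemma F_anti:
  assumes "0 \<le> b" "0 < g" "b * g < 1" "0 < lam" "0 \<le> x" "x \<le> y"
  shows "F_map b g lam d y \<le> F_map b g lam d x"
  unfolding F_map_def using assms
  by (intro mult_left_mono power_mono r_anti) auto

lemma F_bound: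
  assumes "0 \<le> b" "0 < g" "b * g < 1" "0 < lam" "0 \<le> x"
  shows "F_map b g lam d x \<le> lam / g ^ d"
proof -
  have "F_map b g lam d x \<le> F_map b g lam d 0" using F_anti assms by auto
  thus ?thesis by (simp add: F_map_def power_divide)
qed

lemma fp_ex1:
  assumes "0 \<le> b" "0 < g" "b * g < 1" "0 < lam"
  shows "\<exists>!x. x > 0 \<and> F_map b g lam d x = x"
proof -
  define M where "M = lam / g ^ d + 1"
  have gpos: "0 < lam / g ^ d" using assms by simp
  have cont: "\<forall>x. 0 \<le> x \<and> x \<le> M \<longrightarrow> isCont (\<lambda>x. F_map b g lam d x - x) x"
    using assms unfolding F_map_def by (auto intro!: continuous_intros)
  have a: "F_map b g lam d 0 - 0 \<ge> 0" using assms by (simp add: F_map_def)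
  have c: "F_map b g lam d M - M \<le> 0" using F_bound[OF assms, of M d] gpos unfolding M_def by simp
  have "0 \<le> M" using gpos M_def by simp
  from IVT2[of "\<lambda>x. F_map b g lam d x - x" M 0 0, OF c a this cont]
  obtain x where x: "0 \<le> x" "x \<le> M" "F_map b g lam d x - x = 0" by auto
  have xp: "x > 0"
  proof (rule ccontr)
    assume "\<not> x > 0" hence "x = 0" using x by simp
    thus False using x(3) assms by (simp add: F_map_def)
  qed
  show ?thesis
  proof (rule ex1I[of _ x])
    show "x > 0 \<and> F_map b g lam d x = x" using xp x by simp
  next
    fix y assume y: "y > 0 \<and> F_map b g lam d y = y"
    show "y = x"
    proof (rule ccontr)
      assume "y \<noteq> x"
      hence "y < x \<or> x < y" by auto
      thus False
      proof
        assume "y < x"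
        hence "F_map b g lam d x \<le> F_map b g lam d y" using F_anti[OF assms, of y x d] y by auto
        thus False using x y \<open>y < x\<close> by simp
      next
        assume "x < y"
        hence "F_map b g lam d y \<le> F_map b g lam d x" using F_anti[OF assms, of x y d] xp by auto
        thus False using x y \<open>x < y\<close> by simp
      qed
    qed
  qed
qed

lemma xhat_prop:
  assumes "0 \<le> b" "0 < g" "b * g < 1" "0 < lam"
  shows "xhat b g lam d > 0 \<and> F_map b g lam d (xhat b g lam d) = xhat b g lam d"
  unfolding xhat_def using theI'[OF fp_ex1[OF assms]] .

lemma xhat_eq:
  assumes "0 \<le> b" "0 < g" "b * g < 1" "0 < lam" "x > 0" "F_map b g lam d x = x"
  shows "xhat b g lam d = x"
  unfolding xhat_def using the1_equality[OF fp_ex1[OF assms(1-4)]] assms(5,6) by auto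

lemma fp_compare:
  assumes "0 \<le> b" "0 < g" "b * g < 1" "0 < lam" "1 \<le> mu"
    and x: "x > 0" "F_map b g lam d x = x"
    and y: "y > 0" "F_map b g (mu * lam) d y = y"
  shows "x \<le> y \<and> y \<le> mu * x"
proof
  have Fy: "F_map b g (mu * lam) d y = mu * F_map b g lam d y" by (simp add: F_map_def)
  have Fy0: "F_map b g lam d y \<ge> 0" unfolding F_map_def using assms by simp
  show "x \<le> y"
  proof (rule ccontr)
    assume "\<not> x \<le> y"
    hence "F_map b g lam d x \<le> F_map b g lam d y" using F_anti[OF assms(1-4), of y x d] y by auto
    moreover have "1 * F_map b g lam d y \<le> mu * F_map b g lam d y"
      using assms(5) Fy0 by (rule mult_right_mono)
    hence "F_map b g lam d y \<le> y" using Fy y by simp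
    ultimately show False using x \<open>\<not> x \<le> y\<close> by simp
  qed
  show "y \<le> mu * x"
  proof (rule ccontr)
    assume "\<not> y \<le> mu * x"
    moreover have "1 * x \<le> mu * x" using assms(5) x by (intro mult_right_mono) auto
    ultimately have "x \<le> y" by simp
    hence "F_map b g lam d y \<le> F_map b g lam d x" using F_anti[OF assms(1-4), of x y d] x by auto
    hence "mu * F_map b g lam d y \<le> mu * x" using x assms(5) by simp
    thus False using Fy y \<open>\<not> y \<le> mu * x\<close> by simp
  qed
qed

lemma Phi_up:
  assumes "0 \<le> b" "0 < g" "b * g < 1" "0 < x" "x \<le> y"
  shows "PhiF d b g y \<le> (y / x) * PhiF d b g x"
proof -
  define K where "K = real d * (1 - b * g)"
  define D1 where "D1 = (b * x + 1) * (x + g)"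
  define D2 where "D2 = (b * y + 1) * (y + g)"
  have K: "K * y \<ge> 0" using assms unfolding K_def by simp
  have p1: "D1 > 0" unfolding D1_def using assms by (intro mult_pos_pos) (auto simp: add_nonneg_pos)
  have "b * x \<le> b * y" using assms by (intro mult_left_mono) auto
  hence "D1 \<le> D2" unfolding D1_def D2_def
    using assms by (intro mult_mono) auto
  hence "K * y / D2 \<le> K * y / D1" using K p1 by (intro divide_left_mono) auto
  moreover have "PhiF d b g y = K * y / D2" unfolding PhiF_def K_def D2_def by simp
  moreover have "(y / x) * PhiF d b g x = K * y / D1" unfolding PhiF_def K_def D1_def using assms by simp
  ultimately show ?thesis by simp
qed

lemma Phi_down:
  assumes "0 \<le> b" "0 < g" "b * g < 1" "0 < x" "x \<le> y"
  shows "PhiF d b g x \<le> (y / x) * PhiF d b g y"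
proof -
  define K where "K = real d * (1 - b * g)"
  define D1 where "D1 = (b * x + 1) * (x + g)"
  define D2 where "D2 = (b * y + 1) * (y + g)"
  have K: "K \<ge> 0" using assms unfolding K_def by simp
  have p1: "D1 > 0" unfolding D1_def using assms by (intro mult_pos_pos) (auto simp: add_nonneg_pos)
  have p2: "D2 > 0" unfolding D2_def using assms by (intro mult_pos_pos) (auto simp: add_nonneg_pos)
  have "(b * y + 1) * x \<le> (b * x + 1) * y" using assms by (simp add: algebra_simps)
  moreover have "(y + g) * x \<le> (x + g) * y" using assms by (simp add: algebra_simps)
  moreover have "0 \<le> (b * x + 1) * y" using assms by simp
  moreover have "0 \<le> (y + g) * x" using assms by simp
  ultimately have "((b * y + 1) * x) * ((y + g) * x) \<le> ((b * x + 1) * y) * ((x + g) * y)"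
    by (rule mult_mono)
  hence "x * x * D2 \<le> y * y * D1" unfolding D1_def D2_def by (simp add: algebra_simps)
  hence "x * x \<le> (y * y * D1) / D2" using p2 by (simp add: le_divide_eq)
  also have "\<dots> = (y * y / D2) * D1" by simp
  finally have "x * x / D1 \<le> y * y / D2" using p1 by (intro mult_imp_div_pos_le)
  hence "K * (x * x / D1) \<le> K * (y * y / D2)" using K by (rule mult_left_mono)
  hence "K * (x * x / D1) / x \<le> K * (y * y / D2) / x" using assms by (intro divide_right_mono) auto
  moreover have "PhiF d b g x = K * (x * x / D1) / x" unfolding PhiF_def K_def D1_def using assms by simp
  moreover have "(y / x) * PhiF d b g y = K * (y * y / D2) / x" unfolding PhiF_def K_def D2_def using assms by (simp add: field_simps)
  ultimately show ?thesis by simp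
qed

lemma Phi_nonneg:
  assumes "0 \<le> b" "0 < g" "b * g < 1" "0 < x"
  shows "PhiF d b g x \<ge> 0"
  using assms unfolding PhiF_def by (simp add: add_pos_nonneg)

lemma Phi_scale:
  assumes "0 \<le> b" "0 < g" "b * g < 1" "0 < lam" "0 < mu" "mu \<le> c" "1 / mu \<le> c"
  shows "PhiF d b g (xhat b g (mu * lam) d) \<le> c * PhiF d b g (xhat b g lam d)"
proof -
  define x where "x = xhat b g lam d"
  define y where "y = xhat b g (mu * lam) d"
  have ml: "0 < mu * lam" using assms by simp
  note X = xhat_prop[OF assms(1-4), of d, folded x_def]
  note Y = xhat_prop[OF assms(1-3) ml, of d, folded y_def]
  show ?thesis
  proof (cases "1 \<le> mu")
    case True
    from fp_compare[OF assms(1-4) True X[THEN conjunct1] X[THEN conjunct2] Y[THEN conjunct1] Y[THEN conjunct2]]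
    have "x \<le> y" "y \<le> mu * x" by auto
    have "mu * x \<le> c * x" using assms X by (intro mult_right_mono) auto
    have "PhiF d b g y \<le> (y / x) * PhiF d b g x" using Phi_up assms X \<open>x \<le> y\<close> by blast
    also have "\<dots> \<le> c * PhiF d b g x"
    proof (rule mult_right_mono)
      have "y \<le> c * x" using \<open>y \<le> mu * x\<close> \<open>mu * x \<le> c * x\<close> by linarith
      thus "y / x \<le> c" using X by (simp add: divide_le_eq)
      show "0 \<le> PhiF d b g x" using Phi_nonneg[OF assms(1-3), of x d] X by simp
    qed
    finally show ?thesis unfolding x_def y_def .
  next
    case False
    have i1: "1 \<le> 1 / mu" using False assms by simp
    have eq: "(1 / mu) * (mu * lam) = lam" using assms by simp
    have X2: "F_map b g ((1 / mu) * (mu * lam)) d x = x" using X eq by simp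
    from fp_compare[OF assms(1-3) ml i1 Y[THEN conjunct1] Y[THEN conjunct2] X[THEN conjunct1] X2]
    have "y \<le> x" "x \<le> (1/mu) * y" by auto
    have "(1/mu) * y \<le> c * y" using assms Y by (intro mult_right_mono) auto
    have "PhiF d b g y \<le> (x / y) * PhiF d b g x" using Phi_down assms Y \<open>y \<le> x\<close> by blast
    also have "\<dots> \<le> c * PhiF d b g x"
    proof (rule mult_right_mono)
      have "x \<le> c * y" using \<open>x \<le> (1/mu) * y\<close> \<open>(1/mu) * y \<le> c * y\<close> by linarith
      thus "x / y \<le> c" using Y by (simp add: divide_le_eq)
      show "0 \<le> PhiF d b g x" using Phi_nonneg[OF assms(1-3), of x d] X by simp
    qed
    finally show ?thesis unfolding x_def y_def .
  qed
qed

lemma d_unique_Phi: "d_unique d \<delta> b g lam \<longleftrightarrow> d \<ge> 1 \<and> PhiF d b g (xhat b g lam d) \<le> 1 - \<delta>"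
  unfolding d_unique_def PhiF_def Let_def by simp

lemma thr_fp:
  assumes "0 < b" "0 < g" "b * g < 1" "\<Delta> = Suc D"
  shows "xhat b g ((g / b) powr (real \<Delta> / 2)) D = sqrt (g / b)
     \<and> PhiF D b g (sqrt (g / b)) = real D * (1 - sqrt (b * g)) / (1 + sqrt (b * g))"
proof -
  define xs where "xs = sqrt (g / b)"
  define s where "s = sqrt (b * g)"
  have xsp: "xs > 0" unfolding xs_def using assms by simp
  have sp: "s \<ge> 0" "s < 1" unfolding s_def using assms by (auto simp: real_sqrt_lt_1_iff)
  have ss: "s * s = b * g" unfolding s_def using assms by simp
  have xx: "xs * xs = g / b" unfolding xs_def using assms by simp
  have bxs: "b * xs = s"
  proof (rule power2_eq_imp_eq)
    show "(b * xs)\<^sup>2 = s\<^sup>2" using xx ss assms by (simp add: power2_eq_square field_simps)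
  qed (use xsp sp assms in auto)
  have xsg: "xs * s = g"
  proof (rule power2_eq_imp_eq)
    have "(xs * s)\<^sup>2 = (xs * xs) * (s * s)" by (simp add: power2_eq_square algebra_simps)
    also have "\<dots> = (g / b) * (b * g)" using xx ss by simp
    also have "\<dots> = g\<^sup>2" using assms by (simp add: power2_eq_square)
    finally show "(xs * s)\<^sup>2 = g\<^sup>2" .
  qed (use xsp sp assms in auto)
  define T where "T = (g / b) powr (real \<Delta> / 2)"
  have T: "T = xs ^ \<Delta>"
  proof -
    have "xs = (g / b) powr (1/2)" unfolding xs_def using assms by (simp add: powr_half_sqrt)
    hence "xs ^ \<Delta> = ((g / b) powr (1/2)) powr real \<Delta>" using xsp by (simp add: powr_realpow)
    also have "\<dots> = T" unfolding T_def by (simp add: powr_powr)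
    finally show ?thesis by simp
  qed
  have "xs + s * xs > 0" using xsp sp by (simp add: add_pos_nonneg)
  hence r: "(b * xs + 1) / (xs + g) = 1 / xs"
    using bxs xsg[symmetric] xsp sp by (simp add: field_simps)
  have "F_map b g T D xs = xs"
    unfolding F_map_def r T using assms xsp by (simp add: power_one_over field_simps)
  hence "xhat b g T D = xs" using xhat_eq[of b g T xs D] assms xsp unfolding T_def by simp
  moreover have "PhiF D b g xs = real D * (1 - s) / (1 + s)"
  proof -
    have e1: "(b * xs + 1) * (xs + g) = (1 + s) * (1 + s) * xs" using bxs xsg[symmetric] by (simp add: algebra_simps)
    have e2: "1 - b * g = (1 - s) * (1 + s)" using ss by (simp add: algebra_simps)
    have "PhiF D b g xs = real D * ((1 - s) * (1 + s)) * xs / ((1 + s) * (1 + s) * xs)"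
      unfolding PhiF_def by (simp only: e1 e2)
    also have "\<dots> = (real D * (1 - s) / (1 + s)) * (((1 + s) * xs) / ((1 + s) * xs))"
      by (simp add: mult_ac)
    also have "((1 + s) * xs) / ((1 + s) * xs) = 1" using xsp sp by simp
    finally show ?thesis by simp
  qed
  ultimately show ?thesis unfolding T_def xs_def s_def by simp
qed

theorem lemma7p10:
  fixes b g lam \<delta> :: real and \<Delta> :: nat
  assumes "antiferro b g lam"
    and "0 < \<delta>" and "\<delta> < 1"
  defines "lam' \<equiv> (1 + \<delta> / 2) powi (chi b g lam \<Delta>) * lam"
  shows "(\<forall>d::nat. 1 \<le> d \<and> d < \<Delta> \<longrightarrow> d_unique d \<delta> b g lam \<longrightarrow>
            d_unique d (\<delta> / 2) b g lam')
     \<and> (d_unique (\<Delta> - 1) \<delta> b g lam \<and>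
         real (\<Delta> - 1) > (1 - \<delta> / 2) * Delta_bar b g \<longrightarrow>
          (ereal lam \<le> thr b g \<Delta> \<longrightarrow> ereal lam' < thr b g \<Delta>) \<and>
          (ereal lam > thr b g \<Delta> \<longrightarrow> ereal lam' > thr b g \<Delta>))"
proof -
  have b: "0 \<le> b" "0 < g" "b * g < 1" "0 < lam" using assms(1) unfolding antiferro_def by auto
  define c where "c = 1 + \<delta> / 2"
  have c1: "1 \<le> c" using assms(2) unfolding c_def by simp
  have key: "c * (1 - \<delta>) \<le> 1 - \<delta> / 2" unfolding c_def using assms(2)
    by (simp add: algebra_simps)
  have gen: "PhiF d b g (xhat b g (mu * lam) d) \<le> 1 - \<delta> / 2"
    if "PhiF d b g (xhat b g lam d) \<le> 1 - \<delta>" "0 < mu" "mu \<le> c" "1 / mu \<le> c" for d mu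
  proof -
    have "PhiF d b g (xhat b g (mu * lam) d) \<le> c * PhiF d b g (xhat b g lam d)"
      using Phi_scale[OF b that(2-4)] .
    also have "\<dots> \<le> c * (1 - \<delta>)" using that(1) c1 by (intro mult_left_mono) auto
    finally show ?thesis using key by simp
  qed
  define mu where "mu = c powi (chi b g lam \<Delta>)"
  have lam': "lam' = mu * lam" unfolding lam'_def mu_def c_def by simp
  have mu: "0 < mu" "mu \<le> c" "1 / mu \<le> c"
  proof -
    have "1 / c \<le> 1" using c1 by simp
    hence "1 / c \<le> c" "inverse c \<le> c" using c1 by (auto simp: divide_inverse)
    thus "0 < mu" "mu \<le> c" "1 / mu \<le> c"
      unfolding mu_def chi_def using c1 by (auto simp: power_int_minus divide_inverse)
  qed
  have P1: "\<forall>d::nat. 1 \<le> d \<and> d < \<Delta> \<longrightarrow> d_unique d \<delta> b g lam \<longrightarrow>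
            d_unique d (\<delta> / 2) b g lam'"
    unfolding d_unique_Phi lam' using gen mu by blast
  have P2: "(ereal lam \<le> thr b g \<Delta> \<longrightarrow> ereal lam' < thr b g \<Delta>) \<and>
          (ereal lam > thr b g \<Delta> \<longrightarrow> ereal lam' > thr b g \<Delta>)"
    if du: "d_unique (\<Delta> - 1) \<delta> b g lam" and gt: "real (\<Delta> - 1) > (1 - \<delta> / 2) * Delta_bar b g"
  proof (cases "b = 0")
    case True
    thus ?thesis unfolding thr_def by simp
  next
    case False
    hence bp: "0 < b" using b by simp
    define D where "D = \<Delta> - 1"
    have D1: "1 \<le> D" and Phix: "PhiF D b g (xhat b g lam D) \<le> 1 - \<delta>"
      using du unfolding d_unique_Phi D_def by auto
    have DS: "\<Delta> = Suc D" using D1 unfolding D_def by simp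
    define T where "T = (g / b) powr (real \<Delta> / 2)"
    have Tp: "0 < T" unfolding T_def using bp b by simp
    have thr: "thr b g \<Delta> = ereal T" unfolding thr_def T_def using bp by simp
    define s where "s = sqrt (b * g)"
    have sp: "s \<ge> 0" "s < 1" unfolding s_def using b bp by (auto simp: real_sqrt_lt_1_iff)
    note fp = thr_fp[OF bp b(2,3) DS, folded T_def s_def]
    have "real D * (1 - s) / (1 + s) > 1 - \<delta> / 2"
    proof -
      have "real D > (1 - \<delta> / 2) * ((1 + s) / (1 - s))"
        using gt unfolding Delta_bar_def D_def s_def by simp
      hence "real D * (1 - s) > (1 - \<delta> / 2) * (1 + s)" using sp by (simp add: field_simps)
      thus ?thesis using sp by (simp add: field_simps)
    qed
    hence PhiT: "PhiF D b g (xhat b g T D) > 1 - \<delta> / 2" using fp by simp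
    have contra: False if "T = nu * lam" "0 < nu" "nu \<le> c" "1 / nu \<le> c" for nu
      using gen[OF Phix that(2-4)] PhiT that(1) by simp
    show ?thesis
    proof (intro conjI impI)
      assume "ereal lam \<le> thr b g \<Delta>"
      hence le: "lam \<le> T" using thr by simp
      hence "mu = c" unfolding mu_def chi_def thr by simp
      show "ereal lam' < thr b g \<Delta>"
      proof (rule ccontr)
        assume "\<not> ereal lam' < thr b g \<Delta>"
        hence "T \<le> c * lam" using thr lam' \<open>mu = c\<close> by simp
        moreover have "T \<le> T * c" using Tp c1 by simp
        hence "lam \<le> T * c" using le by linarith
        ultimately show False using contra[of "T / lam"] le b Tp c1 by (simp add: field_simps)
      qed
    next
      assume "ereal lam > thr b g \<Delta>"
      hence gt: "lam > T" using thr by simp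
      hence "mu = 1 / c" unfolding mu_def chi_def thr by (simp add: power_int_minus divide_inverse)
      show "ereal lam' > thr b g \<Delta>"
      proof (rule ccontr)
        assume "\<not> ereal lam' > thr b g \<Delta>"
        hence "lam / c \<le> T" using thr lam' \<open>mu = 1 / c\<close> by simp
        moreover have "lam \<le> c * lam" using b c1 by simp
        hence "T \<le> c * lam" using gt by linarith
        ultimately show False using contra[of "T / lam"] gt b Tp c1 by (simp add: field_simps)
      qed
    qed
  qed
  show ?thesis using P1 P2 by blast
qed

end
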